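(* Let $k\ge 2$, let $\mathcal{F}\subset 2^{[n]}$ be weakly $k$-cross-free, let $i\geq 0$ be an integer and let $\mathcal{F}_i=\{X\in\mathcal{F}: 2^{i}<|X|\leq 2^{i+1}\}$. If $\mathcal{A}\subset\mathcal{F}_i$ is an antichain (with respect to inclusion), then $|\mathcal{A}|\leq (k-1)n/2^{i}$.
   Context: Two sets $A,B\subset[n]$ are weakly crossing if $A\setminus B$, $B\setminus A$ and $A\cap B$ are all non-empty; a family is weakly $k$-cross-free if it does not contain $k$ pairwise weakly crossing sets. *)

theory Defs
  imports Complex_Main
begin

definition weakly_crossing :: "'a set \<Rightarrow> 'a set \<Rightarrow> bool" where
  "weakly_crossing A B \<longleftrightarrow> A - B \<noteq> {} \<and> B - A \<noteq> {} \<and> A \<inter> B \<noteq> {}"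

definition weakly_k_cross_free :: "nat \<Rightarrow> 'a set set \<Rightarrow> bool" where
  "weakly_k_cross_free k F \<longleftrightarrow>
     \<not> (\<exists>S \<subseteq> F. card S = k \<and>
          (\<forall>A\<in>S. \<forall>B\<in>S. A \<noteq> B \<longrightarrow> weakly_crossing A B))"

definition antichain_incl :: "'a set set \<Rightarrow> bool" where
  "antichain_incl A \<longleftrightarrow> (\<forall>X\<in>A. \<forall>Y\<in>A. X \<subseteq> Y \<longrightarrow> X = Y)"

end

theory Submission
  imports Defs
begin

theorem claim1:
  fixes n k i :: nat and F A :: "nat set set"
  assumes "k \<ge> 2"
    and "F \<subseteq> Pow {1..n}"
    and "weakly_k_cross_free k F"
    and "A \<subseteq> {X \<in> F. 2 ^ i < card X \<and> card X \<le> 2 ^ (i + 1)}"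
    and "antichain_incl A"
  shows "real (card A) \<le> (real k - 1) * real n / 2 ^ i"
proof -
  have AF: "A \<subseteq> F" using assms(4) by auto
  have Asub: "\<And>X. X \<in> A \<Longrightarrow> X \<subseteq> {1..n}" using AF assms(2) by auto
  have finA: "finite A"
    by (rule finite_subset[of _ "Pow {1..n}"]) (use AF assms(2) in auto)
  have Sx: "card {X\<in>A. x \<in> X} \<le> k - 1" for x
  proof (rule ccontr)
    assume "\<not> ?thesis"
    hence "k \<le> card {X\<in>A. x \<in> X}" by simp
    then obtain S where S: "S \<subseteq> {X\<in>A. x \<in> X}" "card S = k"
      using obtain_subset_with_card_n by metis
    have "\<forall>P\<in>S. \<forall>Q\<in>S. P \<noteq> Q \<longrightarrow> weakly_crossing P Q"
    proof (intro ballI impI)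
      fix P Q assume PQ: "P \<in> S" "Q \<in> S" "P \<noteq> Q"
      hence "P \<in> A" "Q \<in> A" "x \<in> P" "x \<in> Q" using S by auto
      have "\<not> P \<subseteq> Q" "\<not> Q \<subseteq> P" using assms(5) PQ \<open>P \<in> A\<close> \<open>Q \<in> A\<close>
        unfolding antichain_incl_def by metis+
      thus "weakly_crossing P Q" using \<open>x \<in> P\<close> \<open>x \<in> Q\<close>
        unfolding weakly_crossing_def by blast
    qed
    moreover have "S \<subseteq> F" using S AF by auto
    ultimately have "\<exists>S' \<subseteq> F. card S' = k \<and> (\<forall>P\<in>S'. \<forall>Q\<in>S'. P \<noteq> Q \<longrightarrow> weakly_crossing P Q)"
      using S(2) by blast
    thus False using assms(3) unfolding weakly_k_cross_free_def by blast
  qed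
  have cardX: "card X = (\<Sum>x\<in>{1..n}. if x \<in> X then 1 else 0)" if "X \<in> A" for X
  proof -
    have "(\<Sum>x\<in>{1..n}. if x \<in> X then (1::nat) else 0) = card {x\<in>{1..n}. x \<in> X}"
      by (simp add: sum.inter_filter[symmetric])
    also have "{x\<in>{1..n}. x \<in> X} = X" using Asub[OF that] by auto
    finally show ?thesis by simp
  qed
  have "(\<Sum>X\<in>A. card X) = (\<Sum>X\<in>A. \<Sum>x\<in>{1..n}. if x \<in> X then (1::nat) else 0)"
    using cardX by (rule sum.cong[OF refl])
  also have "\<dots> = (\<Sum>x\<in>{1..n}. \<Sum>X\<in>A. if x \<in> X then (1::nat) else 0)"
    by (rule sum.swap)
  also have "\<dots> = (\<Sum>x\<in>{1..n}. card {X\<in>A. x \<in> X})"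
    using finA by (simp add: sum.inter_filter[symmetric])
  also have "\<dots> \<le> (\<Sum>x\<in>{1..n}. k - 1)" by (rule sum_mono) (rule Sx)
  also have "\<dots> = n * (k - 1)" by simp
  finally have up: "(\<Sum>X\<in>A. card X) \<le> n * (k - 1)" .
  have "(\<Sum>X\<in>A. 2 ^ i) \<le> (\<Sum>X\<in>A. card X)"
    proof (rule sum_mono)
    fix X assume "X \<in> A" thus "2 ^ i \<le> card X" using assms(4) by fastforce
  qed
  hence "card A * 2 ^ i \<le> n * (k - 1)" using up by simp
  hence "real (card A * 2 ^ i) \<le> real (n * (k - 1))" by linarith
  hence "real (card A) * 2 ^ i \<le> real n * (real k - 1)" using assms(1) by (simp add: of_nat_diff)
  thus ?thesis by (simp add: field_simps)
qed

end
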